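(* With the notation of the context below, the following hold: (1) As a polynomial in $\alpha$ and $\beta$, the polynomial $d_2(r)$ cannot be divided by $\beta-\alpha$. (2) The polynomial $c_2(r)$ does not have roots $r = \pm 2$. (3) The polynomial $c_2(r)$ is separable.
   Context: Let $K$ be a field of characteristic $p \geq 5$ with $p \equiv 5 \pmod{6}$. Consider the quartic $F := x^3z + y^4 + ry^2z^2 + z^4$. Let $c_2(r)$ denote the coefficient of $x^{2p-1}y^{p-1}z^{p-2}$ in $F^{p-1}$, regarded as a polynomial in $r$. Let $d_2(r)$ denote the coefficient of $y^{p-1}$ in $(y^4+ry^2+1)^{(p-2)/3}$; one has $d_2(r) = \binom{p-1}{(p-2)/3} c_2(r)$. Write $y^4 + ry^2 + 1 = (y^2+\alpha)(y^2+\beta)$, i.e. $\alpha+\beta = r$ and $\alpha\beta = 1$, so that $d_2(r)$ becomes the symmetric polynomial $d_2(r) = \sum_{i+j=(p-5)/6}\binom{(p-2)/3}{i}\binom{(p-2)/3}{j}\alpha^i\beta^j$ in $\alpha$ and $\beta$; in particular $r^2-4 = (\beta-\alpha)^2$. *)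

theory Defs
  imports "HOL-Library.Poly_Mapping" "HOL-Computational_Algebra.Polynomial"
begin

text \<open>Variables for the quartic: x = var 0, y = var 1, z = var 2.
  Variables for the bivariate form of d_2: alpha = var 0, beta = var 1.\<close>

definition mon3 :: "nat \<Rightarrow> nat \<Rightarrow> nat \<Rightarrow> (nat \<Rightarrow>\<^sub>0 nat)" where
  "mon3 a b c = Poly_Mapping.single 0 a + Poly_Mapping.single 1 b + Poly_Mapping.single 2 c"

definition quarticF :: "((nat \<Rightarrow>\<^sub>0 nat) \<Rightarrow>\<^sub>0 'a::field poly)" where
  "quarticF = Poly_Mapping.single (mon3 3 0 1) 1 + Poly_Mapping.single (mon3 0 4 0) 1
            + Poly_Mapping.single (mon3 0 2 2) [:0, 1:] + Poly_Mapping.single (mon3 0 0 4) 1"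

definition c2 :: "nat \<Rightarrow> 'a::field poly" where
  "c2 p = Poly_Mapping.lookup (quarticF ^ (p - 1)) (mon3 (2*p - 1) (p - 1) (p - 2))"

definition d2ab :: "nat \<Rightarrow> ((nat \<Rightarrow>\<^sub>0 nat) \<Rightarrow>\<^sub>0 'a::field)" where
  "d2ab p = (\<Sum>i\<le>(p - 5) div 6.
      Poly_Mapping.single (Poly_Mapping.single 0 i + Poly_Mapping.single 1 ((p - 5) div 6 - i))
        (of_nat (((p - 2) div 3) choose i) * of_nat (((p - 2) div 3) choose ((p - 5) div 6 - i))))"

definition var_alpha :: "((nat \<Rightarrow>\<^sub>0 nat) \<Rightarrow>\<^sub>0 'a::field)" where
  "var_alpha = Poly_Mapping.single (Poly_Mapping.single 0 1) 1"

definition var_beta :: "((nat \<Rightarrow>\<^sub>0 nat) \<Rightarrow>\<^sub>0 'a::field)" where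
  "var_beta = Poly_Mapping.single (Poly_Mapping.single 1 1) 1"

definition separable :: "'a::field poly \<Rightarrow> bool" where
  "separable f \<longleftrightarrow> coprime f (pderiv f)"

end

theory Submission
  imports Defs
begin


definition csum :: "('k \<Rightarrow>\<^sub>0 'b::comm_ring_1) \<Rightarrow> 'b" where
  "csum P = Sum_any (Poly_Mapping.lookup P)"

lemma csum_add: "csum (P + Q) = csum P + csum Q"
  unfolding csum_def lookup_add by (rule Sum_any.distrib) simp_all

lemma csum_uminus: "csum (- P) = - csum P"
  unfolding csum_def lookup_uminus by (simp add: Sum_any.expand_set sum_negf)

lemma csum_diff: "csum (P - Q) = csum P - csum Q"
  using csum_add[of P "-Q"] csum_uminus[of Q] by simp

lemma csum_zero: "csum 0 = 0" unfolding csum_def by simp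

lemma csum_sum: "csum (sum f A) = sum (\<lambda>i. csum (f i)) A"
  by (induction A rule: infinite_finite_induct) (auto simp: csum_add csum_zero)

lemma csum_single: "csum (Poly_Mapping.single k v) = v"
  unfolding csum_def lookup_single by simp

lemma csum_single_mult:
  fixes q :: "('k::comm_monoid_add \<Rightarrow>\<^sub>0 'b::comm_ring_1)"
  shows "csum (Poly_Mapping.single e 1 * q) = csum q"
proof -
  have l: "Poly_Mapping.lookup (Poly_Mapping.single e 1 * q) k =
     (\<Sum>q'. Poly_Mapping.lookup q q' when k = e + q')" for k
    unfolding lookup_mult lookup_single by (simp add: when_mult)
  have "csum (Poly_Mapping.single e 1 * q) = (\<Sum>k. \<Sum>q'. Poly_Mapping.lookup q q' when k = e + q')"
    unfolding csum_def l ..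
  also have "\<dots> = (\<Sum>q'. \<Sum>k. Poly_Mapping.lookup q q' when k = e + q')"
    by (rule Sum_any.swap[where C = "((\<lambda>q'. e + q') ` Poly_Mapping.keys q) \<times> Poly_Mapping.keys q"])
       (auto simp: in_keys_iff)
  also have "\<dots> = csum q" unfolding csum_def by simp
  finally show ?thesis .
qed

lemma fact_nz:
  assumes "prime p" "CHAR('a::field) = p" "k < p"
  shows "(of_nat (fact k) :: 'a) \<noteq> 0"
  using assms by (simp add: of_nat_eq_0_iff_char_dvd prime_dvd_fact_iff)

lemma binom_nz:
  assumes "prime p" "CHAR('a::field) = p" "a < p" "b \<le> a"
  shows "(of_nat (a choose b) :: 'a) \<noteq> 0"
proof
  assume h: "(of_nat (a choose b) :: 'a) = 0"
  have "(of_nat (fact a) :: 'a) = of_nat (fact b * fact (a - b) * (a choose b))"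
    using binomial_fact_lemma[OF assms(4)] by simp
  also have "\<dots> = 0" using h by simp
  finally show False using fact_nz[OF assms(1,2,3)] by simp
qed

lemma part1:
  assumes "prime p" "p mod 6 = 5" "CHAR('a::field) = p"
  shows "\<not> ((var_beta - var_alpha) dvd (d2ab p :: (nat \<Rightarrow>\<^sub>0 nat) \<Rightarrow>\<^sub>0 'a))"
proof
  assume "(var_beta - var_alpha) dvd (d2ab p :: (nat \<Rightarrow>\<^sub>0 nat) \<Rightarrow>\<^sub>0 'a)"
  then obtain q where q: "(d2ab p :: (nat \<Rightarrow>\<^sub>0 nat) \<Rightarrow>\<^sub>0 'a) = (var_beta - var_alpha) * q"
    by (auto elim: dvdE)
  have z: "csum (d2ab p :: (nat \<Rightarrow>\<^sub>0 nat) \<Rightarrow>\<^sub>0 'a) = 0"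
    unfolding q left_diff_distrib csum_diff var_beta_def var_alpha_def csum_single_mult by (rule diff_self)
  define m where "m = (p - 5) div 6"
  define n where "n = (p - 2) div 3"
  obtain k where k: "p = 6 * k + 5" using div_mult_mod_eq[of p 6] assms(2) by (metis add.commute mult.commute)
  have pm: "p = 6 * m + 5" "n = 2 * m + 1" unfolding m_def n_def k by simp_all
  have "csum (d2ab p :: (nat \<Rightarrow>\<^sub>0 nat) \<Rightarrow>\<^sub>0 'a) = (\<Sum>i\<le>m. of_nat ((n choose i) * (n choose (m - i))))"
    unfolding d2ab_def csum_sum csum_single m_def n_def by simp
  also have "\<dots> = of_nat ((n + n) choose m)"
    unfolding of_nat_sum[symmetric] vandermonde ..
  finally have "csum (d2ab p :: (nat \<Rightarrow>\<^sub>0 nat) \<Rightarrow>\<^sub>0 'a) = of_nat ((n + n) choose m)" .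
  moreover have "(of_nat ((n + n) choose m) :: 'a) \<noteq> 0" using binom_nz[OF assms(1,3)] pm by simp
  ultimately show False using z by simp
qed



lemma mon3_add: "mon3 a b c + mon3 a' b' c' = mon3 (a+a') (b+b') (c+c')"
  unfolding mon3_def by (simp add: single_add algebra_simps)

lemma lookup_mon3: "Poly_Mapping.lookup (mon3 a b c) 0 = a" "Poly_Mapping.lookup (mon3 a b c) 1 = b"
  "Poly_Mapping.lookup (mon3 a b c) 2 = c"
  unfolding mon3_def by (simp_all add: lookup_add lookup_single)

lemma mon3_eq: "mon3 a b c = mon3 a' b' c' \<longleftrightarrow> a = a' \<and> b = b' \<and> c = c'"
  by (metis lookup_mon3)

lemma mon3_0: "mon3 0 0 0 = 0" unfolding mon3_def by simp

lemma single_mon3_pow: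
  "(Poly_Mapping.single (mon3 a b c) (v::'b::comm_semiring_1)) ^ n = Poly_Mapping.single (mon3 (n*a) (n*b) (n*c)) (v ^ n)"
proof (induction n)
  case 0 then show ?case by (simp add: mon3_0)
next
  case (Suc n) then show ?case by (simp add: mult_single mon3_add algebra_simps)
qed

lemma of_nat_mult_single: "(of_nat k :: ('c::comm_monoid_add \<Rightarrow>\<^sub>0 'b::comm_semiring_1)) * Poly_Mapping.single K v
   = Poly_Mapping.single K (of_nat k * v)"
  by (metis single_of_nat mult_single add_0)

abbreviation "T1 \<equiv> Poly_Mapping.single (mon3 3 0 1) (1::'a::field poly)"
abbreviation "T2 \<equiv> Poly_Mapping.single (mon3 0 4 0) (1::'a::field poly)"
abbreviation "T3 \<equiv> Poly_Mapping.single (mon3 0 2 2) ([:0,1:]::'a::field poly)"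
abbreviation "T4 \<equiv> Poly_Mapping.single (mon3 0 0 4) (1::'a::field poly)"

lemma quarticF_T: "quarticF = T1 + T2 + T3 + T4"
  unfolding quarticF_def ..

lemma exp12: "(T1 + T2 :: (nat \<Rightarrow>\<^sub>0 nat) \<Rightarrow>\<^sub>0 'a::field poly) ^ j =
   (\<Sum>l\<le>j. Poly_Mapping.single (mon3 (3*l) (4*(j-l)) l) (of_nat (j choose l)))"
  unfolding binomial_ring
  by (rule sum.cong) (simp_all add: single_mon3_pow of_nat_mult_single mult_single mon3_add algebra_simps)

lemma exp123: "(T1 + T2 + T3 :: (nat \<Rightarrow>\<^sub>0 nat) \<Rightarrow>\<^sub>0 'a::field poly) ^ i =
   (\<Sum>j\<le>i. \<Sum>l\<le>j. Poly_Mapping.single (mon3 (3*l) (4*(j-l) + 2*(i-j)) (l + 2*(i-j)))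
      (of_nat ((i choose j) * (j choose l)) * [:0,1:]^(i-j)))"
  unfolding binomial_ring[of "T1 + T2"] exp12
  by (rule sum.cong) (simp_all add: sum_distrib_left sum_distrib_right single_mon3_pow of_nat_mult_single
     mult_single mon3_add algebra_simps)

lemma expF: "(quarticF :: (nat \<Rightarrow>\<^sub>0 nat) \<Rightarrow>\<^sub>0 'a::field poly) ^ N =
   (\<Sum>i\<le>N. \<Sum>j\<le>i. \<Sum>l\<le>j. Poly_Mapping.single (mon3 (3*l) (4*(j-l) + 2*(i-j)) (l + 2*(i-j) + 4*(N-i)))
      (of_nat ((N choose i) * (i choose j) * (j choose l)) * [:0,1:]^(i-j)))"
  unfolding quarticF_T binomial_ring[of "T1 + T2 + T3"] exp123
  by (rule sum.cong) (simp_all add: sum_distrib_left sum_distrib_right single_mon3_pow of_nat_mult_single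
     mult_single mon3_add algebra_simps)

lemma cX: "coeff (of_nat c * [:0,1:]^n :: 'a::field poly) k = (if n = k then of_nat c else 0)"
proof -
  have "[:0,1:]^n = (monom 1 n :: 'a poly)" by (simp add: monom_altdef)
  then show ?thesis by (simp add: of_nat_poly)
qed

lemma coeff_when: "coeff (v when P) k = (coeff v k when P)"
  by (cases P) simp_all

lemma cond_arith:
  fixes m i j l k :: nat
  assumes "l \<le> j" "j \<le> i" "i \<le> 6*m+4"
  shows "(3*l = 12*m+9 \<and> 4*(j-l) + 2*(i-j) = 6*m+4 \<and> l + 2*(i-j) + 4*(6*m+4-i) = 6*m+3 \<and> i - j = k)
     \<longleftrightarrow> (k \<le> m \<and> even (m-k) \<and> i = 6*m+4 - (m-k) div 2 \<and> j = 5*m+4 + (m-k) div 2 \<and> l = 4*m+3)"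
proof -
  obtain a b c where abc: "j = l + a" "i = l + a + b" "6*m+4 = l + a + b + c"
    using assms by (metis le_Suc_ex add.assoc)
  have r: "j - l = a" "i - j = b" "6*m+4-i = c" using abc by simp_all
  show ?thesis
  proof
    assume H: "3*l = 12*m+9 \<and> 4*(j-l) + 2*(i-j) = 6*m+4 \<and> l + 2*(i-j) + 4*(6*m+4-i) = 6*m+3 \<and> i - j = k"
    then have l: "l = 4*m+3" and h2: "4*a + 2*b = 6*m+4" and h3: "l + 2*b + 4*c = 6*m+3" and kb: "k = b"
      unfolding r by simp_all
    have mb: "m = b + 2*c" using l h3 by simp
    then have t: "(m-k) div 2 = c" using kb by simp
    have "a = m + 1 + c" using h2 mb by simp
    then show "k \<le> m \<and> even (m-k) \<and> i = 6*m+4 - (m-k) div 2 \<and> j = 5*m+4 + (m-k) div 2 \<and> l = 4*m+3"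
      using t mb kb l abc by simp
  next
    assume H: "k \<le> m \<and> even (m-k) \<and> i = 6*m+4 - (m-k) div 2 \<and> j = 5*m+4 + (m-k) div 2 \<and> l = 4*m+3"
    then obtain t where t: "m = k + 2*t" by (metis dvd_def le_add_diff_inverse)
    have "(m-k) div 2 = t" using t by simp
    then have "i = 6*m+4 - t" "j = 5*m+4+t" "l = 4*m+3" using H by simp_all
    then show "3*l = 12*m+9 \<and> 4*(j-l) + 2*(i-j) = 6*m+4 \<and> l + 2*(i-j) + 4*(6*m+4-i) = 6*m+3 \<and> i - j = k"
      using t by simp
  qed
qed

lemma sum_if_const: "(\<Sum>x\<in>S. if P then g x else 0) = (if P then (\<Sum>x\<in>S. g x) else 0)"
  by (cases P) simp_all

definition Mc :: "nat \<Rightarrow> nat \<Rightarrow> nat" where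
  "Mc m t = ((6*m+4) choose (6*m+4-t)) * ((6*m+4-t) choose (5*m+4+t)) * ((5*m+4+t) choose (4*m+3))"

lemma coeff_c2:
  assumes "p = 6*m+5"
  shows "coeff (c2 p :: 'a::field poly) k = (if k \<le> m \<and> even (m-k) then of_nat (Mc m ((m-k) div 2)) else 0)"
proof -
  define N where "N = 6*m+4"
  define t where "t = (m-k) div 2"
  define g where "g = (k \<le> m \<and> even (m-k))"
  have c: "c2 p = Poly_Mapping.lookup ((quarticF :: (nat \<Rightarrow>\<^sub>0 nat) \<Rightarrow>\<^sub>0 'a poly) ^ N) (mon3 (12*m+9) (6*m+4) (6*m+3))"
    unfolding c2_def assms N_def by (simp add: algebra_simps)
  have 1: "coeff (c2 p :: 'a poly) k = (\<Sum>i\<le>N. \<Sum>j\<le>i. \<Sum>l\<le>j.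
     (if (3*l = 12*m+9 \<and> 4*(j-l) + 2*(i-j) = 6*m+4 \<and> l + 2*(i-j) + 4*(N-i) = 6*m+3 \<and> i - j = k)
      then of_nat ((N choose i) * (i choose j) * (j choose l)) else 0))"
    unfolding c expF lookup_sum lookup_single coeff_sum
    by (intro sum.cong refl) (auto simp: coeff_when cX when_def mon3_eq simp del: of_nat_mult)
  also have "\<dots> = (\<Sum>i\<le>N. \<Sum>j\<le>i. \<Sum>l\<le>j.
     (if i = N - t then if j = 5*m+4+t then if l = 4*m+3 then (if g then of_nat ((N choose i) * (i choose j) * (j choose l)) else 0) else 0 else 0 else 0))"
  proof (intro sum.cong refl)
    fix i j l assume "i \<in> {..N}" "j \<in> {..i}" "l \<in> {..j}"
    then have r: "l \<le> j" "j \<le> i" "i \<le> 6*m+4" unfolding N_def by auto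
    show "(if (3*l = 12*m+9 \<and> 4*(j-l) + 2*(i-j) = 6*m+4 \<and> l + 2*(i-j) + 4*(N-i) = 6*m+3 \<and> i - j = k)
      then of_nat ((N choose i) * (i choose j) * (j choose l)) else (0::'a)) =
      (if i = N - t then if j = 5*m+4+t then if l = 4*m+3 then (if g then of_nat ((N choose i) * (i choose j) * (j choose l)) else 0) else 0 else 0 else 0)"
      using cond_arith[OF r, of k] unfolding N_def t_def g_def by auto
  qed
  also have "\<dots> = (if g then of_nat (Mc m t) else 0)"
  proof (cases g)
    case True
    then have "t \<le> m" "2 * t \<le> m" unfolding t_def g_def by auto
    then show ?thesis using True unfolding Mc_def N_def by (simp add: sum_if_const)
  qed (simp add: sum_if_const)
  finally show ?thesis unfolding g_def t_def .
qed

lemma Mc_fact: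
  assumes "2*t \<le> m"
  shows "Mc m t * (fact t * fact (m-2*t) * fact (m+1+t) * fact (4*m+3)) = (fact (6*m+4) :: nat)"
proof -
  have a: "fact (6*m+4-t) * fact t * ((6*m+4) choose (6*m+4-t)) = (fact (6*m+4) :: nat)"
    using binomial_fact_lemma[of "6*m+4-t" "6*m+4"] assms by simp
  have b: "fact (5*m+4+t) * fact (m-2*t) * ((6*m+4-t) choose (5*m+4+t)) = (fact (6*m+4-t) :: nat)"
    using binomial_fact_lemma[of "5*m+4+t" "6*m+4-t"] assms
    by (simp add: numeral_eq_Suc)
  have c: "fact (4*m+3) * fact (m+1+t) * ((5*m+4+t) choose (4*m+3)) = (fact (5*m+4+t) :: nat)"
    using binomial_fact_lemma[of "4*m+3" "5*m+4+t"] by simp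
  define C1 where "C1 = (6*m+4) choose (6*m+4-t)"
  define C2 where "C2 = (6*m+4-t) choose (5*m+4+t)"
  define C3 where "C3 = (5*m+4+t) choose (4*m+3)"
  have "Mc m t * (fact t * fact (m-2*t) * fact (m+1+t) * fact (4*m+3)) =
     C1 * fact t * (C2 * fact (m-2*t) * (C3 * fact (m+1+t) * fact (4*m+3)))"
    unfolding Mc_def C1_def C2_def C3_def by (simp only: mult_ac)
  also have "C3 * fact (m+1+t) * fact (4*m+3) = fact (5*m+4+t)"
    using c unfolding C3_def by (simp only: mult_ac)
  also have "C2 * fact (m-2*t) * fact (5*m+4+t) = fact (6*m+4-t)"
    using b unfolding C2_def by (simp only: mult_ac)
  also have "C1 * fact t * fact (6*m+4-t) = fact (6*m+4)"
    using a unfolding C1_def by (simp only: mult_ac)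
  finally show ?thesis .
qed

lemma Mc_rec:
  assumes "2*(s+1) \<le> m" "k = m - 2*(s+1)"
  shows "(k+2)*(k+1) * Mc m s = (s+1)*(m+2+s) * Mc m (s+1)"
proof -
  have e1: "m - 2*s = k+2" using assms by simp
  have s1: "2*s \<le> m" using assms by simp
  have A: "Mc m s * (fact s * fact (k+2) * fact (m+1+s) * fact (4*m+3)) = (fact (6*m+4) :: nat)"
    using Mc_fact[OF s1] unfolding e1 .
  have e2: "m+1+(s+1) = Suc (m+1+s)" by simp
  have B: "Mc m (s+1) * (fact (s+1) * fact k * fact (Suc (m+1+s)) * fact (4*m+3)) = (fact (6*m+4) :: nat)"
    using Mc_fact[OF assms(1)] unfolding assms(2)[symmetric] e2 .
  define Q where "Q = fact s * fact k * fact (m+1+s) * (fact (4*m+3) :: nat)"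
  have Q0: "Q \<noteq> 0" unfolding Q_def by simp
  have f1: "(k+2)*(k+1)*(fact k :: nat) = fact (k+2)"
    by (simp only: fact_Suc add_2_eq_Suc' Suc_eq_plus1[symmetric] mult_ac) simp
  have f2: "(s+1) * (fact s :: nat) = fact (s+1)" by simp
  have f3: "(m+2+s) * (fact (m+1+s) :: nat) = fact (Suc (m+1+s))"
    by (simp only: fact_Suc) simp
  have "((k+2)*(k+1) * Mc m s) * Q = Mc m s * (fact s * ((k+2)*(k+1)*fact k) * fact (m+1+s) * fact (4*m+3))"
    unfolding Q_def by (simp only: mult_ac)
  also have "\<dots> = fact (6*m+4)" unfolding f1 by (rule A)
  finally have L: "((k+2)*(k+1) * Mc m s) * Q = fact (6*m+4)" .
  have "((s+1)*(m+2+s) * Mc m (s+1)) * Q = Mc m (s+1) * (((s+1)*fact s) * fact k * ((m+2+s) * fact (m+1+s)) * fact (4*m+3))"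
    unfolding Q_def by (simp only: mult_ac)
  also have "\<dots> = fact (6*m+4)" unfolding f2 f3 by (rule B)
  finally have R: "((s+1)*(m+2+s) * Mc m (s+1)) * Q = fact (6*m+4)" .
  show ?thesis using L R Q0 by (metis mult_right_cancel)
qed

lemma nat_ident:
  fixes k m t :: nat
  assumes "m = k + 2*t"
  shows "k*(k-1) + m*(3*m+2) = (4*m+1)*k + 4*t*(m+1+t)"
proof (cases k)
  case 0 then show ?thesis using assms by (simp add: algebra_simps)
next
  case (Suc k') then show ?thesis using assms by (simp add: algebra_simps)
qed


abbreviation D :: "nat \<Rightarrow> 'a::field poly \<Rightarrow> 'a poly" where "D k f \<equiv> (pderiv ^^ k) f"

lemma degree_pderiv_le: "degree (pderiv p) \<le> degree p - 1"
  by (rule degree_le) (auto simp: coeff_pderiv coeff_eq_0)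

lemma degree_D_le: "degree (D k f) \<le> degree f - k"
proof (induction k)
  case (Suc k)
  have "degree (D (Suc k) f) = degree (pderiv (D k f))" by simp
  also have "\<dots> \<le> degree (D k f) - 1" by (rule degree_pderiv_le)
  also have "\<dots> \<le> degree f - Suc k" using Suc by linarith
  finally show ?case .
qed simp

lemma coeff_D: "of_nat (fact i) * coeff (D k f) i = of_nat (fact (i + k)) * coeff f (i + k)"
proof (induction k arbitrary: i)
  case (Suc k)
  have "of_nat (fact i) * coeff (D (Suc k) f) i = of_nat (fact i) * of_nat (Suc i) * coeff (D k f) (Suc i)"
    by (simp add: coeff_pderiv)
  also have "\<dots> = of_nat (fact (Suc i)) * coeff (D k f) (Suc i)"
    by (simp add: algebra_simps)
  also have "\<dots> = of_nat (fact (i + Suc k)) * coeff f (i + Suc k)"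
    using Suc[of "Suc i"] by simp
  finally show ?case .
qed simp

lemma pd1: "pderiv [:-4,0,1::'a::field:] = smult 2 [:0,1:]"
  by (simp add: pderiv_pCons)
lemma pd2: "pderiv [:0,1::'a::field:] = 1"
  by (simp add: pderiv_pCons)

lemma ode_step0:
  fixes g :: "'a::field poly"
  assumes "[:-4,0,1:] * pderiv (pderiv g) + smult a ([:0,1:] * pderiv g) + smult b g = 0"
  shows "[:-4,0,1:] * pderiv (pderiv (pderiv g)) + smult (a + 2) ([:0,1:] * pderiv (pderiv g)) + smult (a + b) (pderiv g) = 0"
proof -
  have "pderiv ([:-4,0,1:] * pderiv (pderiv g) + smult a ([:0,1:] * pderiv g) + smult b g) = 0"
    using assms by simp
  then have "[:-4,0,1:] * pderiv (pderiv (pderiv g)) + smult 2 [:0,1:] * pderiv (pderiv g)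
     + smult a ([:0,1:] * pderiv (pderiv g) + pderiv g) + smult b (pderiv g) = 0"
    unfolding pderiv_add pderiv_mult pderiv_smult pd1 pd2 by (simp add: algebra_simps)
  then show ?thesis by (simp add: algebra_simps smult_add_left smult_add_right)
qed

lemma ode_step:
  fixes f :: "'a::field poly"
  assumes "[:-4,0,1:] * D (k+2) f + smult a ([:0,1:] * D (k+1) f) + smult b (D k f) = 0"
  shows "[:-4,0,1:] * D (Suc k+2) f + smult (a + 2) ([:0,1:] * D (Suc k+1) f) + smult (a + b) (D (Suc k) f) = 0"
  using ode_step0[of "D k f" a b] assms by (simp add: numeral_2_eq_2)

lemma ode_all:
  fixes f :: "'a::field poly"
  assumes ode: "[:-4,0,1:] * D 2 f + smult (- of_nat (4*m+1)) ([:0,1:] * D 1 f) + smult c (D 0 f) = 0"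
  shows "\<exists>b. [:-4,0,1:] * D (k+2) f + smult (of_nat (2*k) - of_nat (4*m+1)) ([:0,1:] * D (k+1) f) + smult b (D k f) = 0"
proof (induction k)
  case 0
  show ?case using ode by (intro exI[of _ c]) (simp add: numeral_2_eq_2)
next
  case (Suc k)
  then obtain b where "[:-4,0,1:] * D (k+2) f + smult (of_nat (2*k) - of_nat (4*m+1)) ([:0,1:] * D (k+1) f) + smult b (D k f) = 0"
    by blast
  from ode_step[OF this] show ?case
    by (intro exI[of _ "of_nat (2*k) - of_nat (4*m+1) + b"]) (simp add: algebra_simps)
qed

lemma const_D:
  fixes f :: "'a::field poly"
  assumes "degree f \<le> m"
  shows "D m f = [:of_nat (fact m) * coeff f m:]"
proof -
  have "degree (D m f) = 0" using degree_D_le[of m f] assms by simp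
  then have "D m f = [:coeff (D m f) 0:]" by (metis degree_eq_zeroE coeff_pCons_0)
  also have "coeff (D m f) 0 = of_nat (fact m) * coeff f m" using coeff_D[of 0 m f] by simp
  finally show ?thesis .
qed

lemma at_pm2:
  fixes f :: "'a::field poly"
  assumes ode: "[:-4,0,1:] * D 2 f + smult (- of_nat (4*m+1)) ([:0,1:] * D 1 f) + smult c (D 0 f) = 0"
    and r0: "r0 * r0 = 4" "r0 \<noteq> 0"
    and nz: "\<And>k. k < m \<Longrightarrow> (of_nat (2*k) :: 'a) \<noteq> of_nat (4*m+1)"
    and deg: "degree f \<le> m" and lc: "of_nat (fact m) * coeff f m \<noteq> 0"
  shows "poly f r0 \<noteq> 0"
proof
  assume f0: "poly f r0 = 0"
  have "k \<le> m \<Longrightarrow> poly (D k f) r0 = 0" for k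
  proof (induction k)
    case 0 then show ?case using f0 by simp
  next
    case (Suc k)
    obtain b where b: "[:-4,0,1:] * D (k+2) f + smult (of_nat (2*k) - of_nat (4*m+1)) ([:0,1:] * D (k+1) f) + smult b (D k f) = 0"
      using ode_all[OF ode] by blast
    have e: "poly [:-4,0,1:] r0 * poly (D (k+2) f) r0 + (of_nat (2*k) - of_nat (4*m+1)) * (poly [:0,1:] r0 * poly (D (k+1) f) r0) + b * poly (D k f) r0 = 0"
      using arg_cong[OF b, of "\<lambda>q. poly q r0"] by (simp only: poly_add poly_mult poly_smult poly_0)
    have pz: "poly [:-4,0,1:] r0 = 0" using r0 by (simp add: algebra_simps)
    have hz: "poly [:0,1:] r0 = r0" by simp
    have "poly (D k f) r0 = 0" using Suc by simp
    then have "(of_nat (2*k) - of_nat (4*m+1)) * r0 * poly (D (k+1) f) r0 = 0"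
      using e unfolding pz hz by (simp add: algebra_simps)
    moreover have "(of_nat (2*k) - of_nat (4*m+1) :: 'a) \<noteq> 0" using nz[of k] Suc by simp
    ultimately show ?case using r0 by simp
  qed
  then have "poly (D m f) r0 = 0" by simp
  then show False using const_D[OF deg] lc by simp
qed

lemma cancel_lin:
  fixes g h :: "'a::field poly"
  assumes "poly g a \<noteq> 0" "g dvd [:-a,1:] * h"
  shows "g dvd h"
proof -
  obtain q where q: "[:-a,1:] * h = g * q" using assms(2) by (auto elim: dvdE)
  have "poly g a * poly q a = 0" using arg_cong[OF q, of "\<lambda>r. poly r a"] by simp
  then have "poly q a = 0" using assms(1) by simp
  then have "[:-a,1:] dvd q" using poly_eq_0_iff_dvd by blast
  then obtain q' where q': "q = [:-a,1:] * q'" by (rule dvdE)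
  have "[:-a,1:] * h = [:-a,1:] * (g * q')" using q unfolding q' by (simp add: algebra_simps)
  then have "h = g * q'" by (subst (asm) mult_left_cancel) simp_all
  then show ?thesis by simp
qed

lemma poly_dvd_nz:
  fixes g f :: "'a::field poly"
  assumes "g dvd f" "poly f a \<noteq> 0"
  shows "poly g a \<noteq> 0"
  using assms by (auto elim!: dvdE)

lemma sep_ode:
  fixes f :: "'a::field poly"
  assumes ode: "[:-4,0,1:] * D 2 f + smult (- of_nat (4*m+1)) ([:0,1:] * D 1 f) + smult c (D 0 f) = 0"
    and p2: "poly f 2 \<noteq> 0" and m2: "poly f (-2) \<noteq> 0"
    and deg: "degree f \<le> m" and lc: "of_nat (fact m) * coeff f m \<noteq> 0"
  shows "coprime f (pderiv f)"
proof (rule coprimeI)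
  fix g assume g1: "g dvd f" and g2: "g dvd pderiv f"
  have c1: "poly g 2 \<noteq> 0" using poly_dvd_nz[OF g1 p2] .
  have c2: "poly g (-2) \<noteq> 0" using poly_dvd_nz[OF g1 m2] .
  have e0: "[:-2,1:] * [:- (-2),1::'a:] = [:-4,0,1:]" by (simp add: algebra_simps)
  have eq: "[:-4,0,1::'a:] * h = [:-2,1:] * ([:- (-2),1:] * h)" for h
    unfolding mult.assoc[symmetric] e0 ..
  have cop: "g dvd [:-4,0,1::'a:] * h \<Longrightarrow> g dvd h" for h
    unfolding eq by (rule cancel_lin[OF c2], rule cancel_lin[OF c1])
  have "k \<le> m \<Longrightarrow> g dvd D k f \<and> g dvd D (k+1) f" for k
  proof (induction k)
    case 0 then show ?case using g1 g2 by simp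
  next
    case (Suc k)
    have i0: "g dvd D k f" and i1: "g dvd D (k+1) f" using Suc.IH Suc.prems by simp_all
    obtain b where b: "[:-4,0,1:] * D (k+2) f + smult (of_nat (2*k) - of_nat (4*m+1)) ([:0,1:] * D (k+1) f) + smult b (D k f) = 0"
      using ode_all[OF ode] by blast
    then have e: "[:-4,0,1:] * D (k+2) f = - (smult (of_nat (2*k) - of_nat (4*m+1)) ([:0,1:] * D (k+1) f) + smult b (D k f))"
      by (simp only: eq_neg_iff_add_eq_0 add.assoc)
    have "g dvd smult (of_nat (2*k) - of_nat (4*m+1)) ([:0,1:] * D (k+1) f)"
      by (rule dvd_smult, rule dvd_mult, rule i1)
    moreover have "g dvd smult b (D k f)" by (rule dvd_smult, rule i0)
    ultimately have "g dvd - (smult (of_nat (2*k) - of_nat (4*m+1)) ([:0,1:] * D (k+1) f) + smult b (D k f))"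
      by (intro dvd_minus_iff[THEN iffD2] dvd_add)
    then have "g dvd [:-4,0,1:] * D (k+2) f" unfolding e .
    then have "g dvd D (k+2) f" by (rule cop)
    then show ?case using i1 by (simp add: numeral_2_eq_2)
  qed
  then have "g dvd D m f" by simp
  then have "g dvd [:of_nat (fact m) * coeff f m:]" using const_D[OF deg] by simp
  moreover have ne: "[:of_nat (fact m) * coeff f m:] \<noteq> 0" using lc by simp
  ultimately have "degree g \<le> 0" using dvd_imp_degree_le[OF _ ne] by (metis degree_pCons_0)
  moreover have "g \<noteq> 0" using ne \<open>g dvd [:of_nat (fact m) * coeff f m:]\<close> by auto
  ultimately show "is_unit g" using is_unit_iff_degree by (metis le_zero_eq)
qed


lemma rec_e:
  assumes "p = 6*m+5"
  shows "4 * of_nat ((k+1)*(k+2)) * coeff (c2 p :: 'a::field poly) (k+2) + of_nat ((4*m+1)*k) * coeff (c2 p :: 'a poly) k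
       = of_nat (k*(k-1) + m*(3*m+2)) * coeff (c2 p :: 'a poly) k"
proof (cases "k \<le> m \<and> even (m-k)")
  case True
  define t where "t = (m-k) div 2"
  have mt: "m = k + 2*t" using True unfolding t_def by auto
  have ek: "coeff (c2 p :: 'a poly) k = of_nat (Mc m t)" unfolding coeff_c2[OF assms] t_def using True by (rule if_P)
  have ni: "(of_nat (k*(k-1) + m*(3*m+2)) :: 'a) = of_nat ((4*m+1)*k) + of_nat (4*t*(m+1+t))"
    using nat_ident[OF mt] by (metis of_nat_add)
  have key: "4 * of_nat ((k+1)*(k+2)) * coeff (c2 p :: 'a poly) (k+2) = of_nat (4*t*(m+1+t)) * of_nat (Mc m t)"
  proof (cases t)
    case 0
    then have "coeff (c2 p :: 'a poly) (k+2) = 0" using mt unfolding coeff_c2[OF assms] by simp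
    then show ?thesis using 0 by simp
  next
    case (Suc s)
    have g2: "k+2 \<le> m \<and> even (m-(k+2))" "(m-(k+2)) div 2 = s" using mt Suc by auto
    have "coeff (c2 p :: 'a poly) (k+2) = of_nat (Mc m s)" unfolding coeff_c2[OF assms] g2(2) using g2(1) by (rule if_P)
    moreover have r: "(k+2)*(k+1) * Mc m s = (s+1)*(m+2+s) * Mc m (s+1)"
      by (rule Mc_rec) (use mt Suc in simp_all)
    have "4*((k+1)*(k+2))*Mc m s = 4*t*(m+1+t)*Mc m t"
    proof -
      have "4*((k+1)*(k+2))*Mc m s = 4*((k+2)*(k+1) * Mc m s)" by (simp only: mult_ac)
      also have "\<dots> = 4*((s+1)*(m+2+s) * Mc m (s+1))" by (simp only: r)
      also have "\<dots> = 4*t*(m+1+t)*Mc m t" using Suc by (simp add: algebra_simps)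
      finally show ?thesis .
    qed
    then have "(of_nat (4*((k+1)*(k+2))*Mc m s) :: 'a) = of_nat (4*t*(m+1+t)*Mc m t)" by (rule arg_cong)
    ultimately show ?thesis by (simp only: of_nat_mult of_nat_numeral)
  qed
  show ?thesis unfolding ni key ek by (simp add: algebra_simps)
next
  case False
  have n2: "\<not> (k+2 \<le> m \<and> even (m-(k+2)))"
  proof
    assume h: "k+2 \<le> m \<and> even (m-(k+2))"
    then have "m - k = (m-(k+2)) + 2" by arith
    then show False using h False by simp
  qed
  have "coeff (c2 p :: 'a poly) k = 0" unfolding coeff_c2[OF assms] using False by (rule if_not_P)
  moreover have "coeff (c2 p :: 'a poly) (k+2) = 0" unfolding coeff_c2[OF assms] using n2 by (rule if_not_P)
  ultimately show ?thesis by simp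
qed


lemma lin_id: "(x::'a::field)*e - 4*(a*e2) - q*(kk*e) + mm*e = (x+mm)*e - (4*a*e2 + q*kk*e)"
  by (simp add: algebra_simps)

lemma ode_c2:
  assumes "p = 6*m+5"
  shows "[:-4,0,1:] * D 2 (c2 p :: 'a::field poly) + smult (- of_nat (4*m+1)) ([:0,1:] * D 1 (c2 p))
         + smult (of_nat (m*(3*m+2))) (D 0 (c2 p)) = 0"
proof (rule poly_eqI)
  fix k
  define f where "f = (c2 p :: 'a poly)"
  have cD2: "coeff (D 2 f) n = of_nat ((n+1)*(n+2)) * coeff f (n+2)" for n
    by (simp add: numeral_2_eq_2 coeff_pderiv algebra_simps)
  have ck: "coeff ([:-4,0,1:] * D 2 f + smult (- of_nat (4*m+1)) ([:0,1:] * D 1 f) + smult (of_nat (m*(3*m+2))) (D 0 f)) k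
     = of_nat (k*(k-1)) * coeff f k - 4 * (of_nat ((k+1)*(k+2)) * coeff f (k+2))
       - of_nat (4*m+1) * (of_nat k * coeff f k) + of_nat (m*(3*m+2)) * coeff f k"
  proof (cases k)
    case 0 then show ?thesis using cD2[of 0] by simp
  next
    case (Suc j)
    show ?thesis
    proof (cases j)
      case 0 then show ?thesis using Suc cD2[of 1] by (simp add: coeff_pderiv algebra_simps)
    next
      case (Suc i)
      then show ?thesis using \<open>k = Suc j\<close> cD2[of i] cD2[of "Suc (Suc i)"]
        by (simp add: coeff_pderiv algebra_simps)
    qed
  qed
  have r: "4 * of_nat ((k+1)*(k+2)) * coeff f (k+2) + of_nat ((4*m+1)*k) * coeff f k
       = of_nat (k*(k-1) + m*(3*m+2)) * coeff f k"
    unfolding f_def by (rule rec_e[OF assms])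
  show "coeff ([:-4,0,1:] * D 2 (c2 p :: 'a::field poly) + smult (- of_nat (4*m+1)) ([:0,1:] * D 1 (c2 p))
         + smult (of_nat (m*(3*m+2))) (D 0 (c2 p))) k = coeff 0 k"
  proof -
    have r': "4 * of_nat ((k+1)*(k+2)) * coeff f (k+2) + of_nat (4*m+1) * of_nat k * coeff f k
       = (of_nat (k*(k-1)) + of_nat (m*(3*m+2))) * coeff f k"
      using r by (simp only: of_nat_add of_nat_mult[of "4*m+1" k])
    have "coeff ([:-4,0,1:] * D 2 f + smult (- of_nat (4*m+1)) ([:0,1:] * D 1 f) + smult (of_nat (m*(3*m+2))) (D 0 f)) k
       = (of_nat (k*(k-1)) + of_nat (m*(3*m+2))) * coeff f k - (4 * of_nat ((k+1)*(k+2)) * coeff f (k+2) + of_nat (4*m+1) * of_nat k * coeff f k)"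
      unfolding ck by (rule lin_id)
    also have "\<dots> = 0" unfolding r' by simp
    finally show ?thesis unfolding f_def by simp
  qed
qed

theorem lemma3p3:
  fixes p :: nat
  assumes "prime p" and "p \<ge> 5" and "p mod 6 = 5"
    and "CHAR('a::field) = p"
  shows "\<not> ((var_beta - var_alpha) dvd (d2ab p :: (nat \<Rightarrow>\<^sub>0 nat) \<Rightarrow>\<^sub>0 'a))
         \<and> poly (c2 p :: 'a poly) 2 \<noteq> 0 \<and> poly (c2 p :: 'a poly) (-2) \<noteq> 0
         \<and> separable (c2 p :: 'a poly)"
proof -
  obtain m where pm: "p = 6 * m + 5" using div_mult_mod_eq[of p 6] assms(3) by (metis add.commute mult.commute)
  define f where "f = (c2 p :: 'a poly)"
  have ode: "[:-4,0,1:] * D 2 f + smult (- of_nat (4*m+1)) ([:0,1:] * D 1 f) + smult (of_nat (m*(3*m+2))) (D 0 f) = 0"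
    unfolding f_def by (rule ode_c2[OF pm])
  have deg: "degree f \<le> m"
    by (rule degree_le) (simp add: f_def coeff_c2[OF pm])
  have cm: "coeff f m = of_nat (Mc m 0)" unfolding f_def coeff_c2[OF pm] by simp
  have "(of_nat (Mc m 0) :: 'a) \<noteq> 0"
    unfolding Mc_def of_nat_mult using binom_nz[OF assms(1,4)] pm by simp
  moreover have "(of_nat (fact m) :: 'a) \<noteq> 0" using fact_nz[OF assms(1,4)] pm by simp
  ultimately have lc: "of_nat (fact m) * coeff f m \<noteq> 0" unfolding cm by simp
  have two: "(2::'a) \<noteq> 0"
  proof
    assume "(2::'a) = 0"
    then have "(of_nat 2 :: 'a) = 0" by simp
    then have "p dvd 2" using assms(4) by (simp only: of_nat_eq_0_iff_char_dvd)
    then show False using assms(2) by (simp add: nat_dvd_not_less)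
  qed
  have nz: "(of_nat (2*k) :: 'a) \<noteq> of_nat (4*m+1)" if "k < m" for k
  proof
    assume h: "(of_nat (2*k) :: 'a) = of_nat (4*m+1)"
    have "(of_nat (2*k) :: 'a) = of_nat (4*m+1) \<longleftrightarrow> CHAR('a) dvd (4*m+1 - 2*k)"
      by (rule of_nat_eq_iff_char_dvd) (use that in simp)
    then have "p dvd (4*m+1 - 2*k)" using h assms(4) by simp
    moreover have "0 < 4*m+1 - 2*k" "4*m+1 - 2*k < p" using that pm by simp_all
    ultimately show False by (simp add: nat_dvd_not_less)
  qed
  have p2: "poly f 2 \<noteq> 0"
    by (rule at_pm2[OF ode _ _ nz deg lc]) (use two in simp_all)
  have m2: "poly f (-2) \<noteq> 0"
    by (rule at_pm2[OF ode _ _ nz deg lc]) (use two in simp_all)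
  have sep: "separable f" unfolding separable_def by (rule sep_ode[OF ode p2 m2 deg lc])
  show ?thesis using part1[OF assms(1,3,4)] p2 m2 sep unfolding f_def by simp
qed

end
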